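(* Let $q\ge 4$ be a power of $2$. Then there exists a linear AOA$(1,3,q+2,q)$.
   Context: An orthogonal array OA$(t,k,v)$ (with $1\le t\le k$) is a $v^t\times k$ array with entries from a set $X$ of size $v$ such that, for every choice of $t$ of its columns, each $t$-tuple in $X^t$ appears exactly once as a row of the corresponding $v^t\times t$ subarray. For integers $1\le s\le t\le k$, an augmented orthogonal array AOA$(s,t,k,v)$ is a $v^t\times(k+1)$ array $A$ such that: (1) the first $k$ columns of $A$ form an OA$(t,k,v)$ on a symbol set $X$ of size $v$; (2) the last column of $A$ has entries from a set $Y$ of size $v^{t-s}$; (3) for any choice of $s$ of the first $k$ columns, these $s$ columns together with the last column contain every $(s+1)$-tuple of $X^s\times Y$ exactly once as a row. For a prime power $q$, an AOA$(s,t,k,q)$ is linear if $X=\mathbb{F}_q$, $Y=\mathbb{F}_q^{t-s}$, and its set of rows, regarded as vectors in $\mathbb{F}_q^{k}\times\mathbb{F}_q^{t-s}=\mathbb{F}_q^{k+t-s}$, is an $\mathbb{F}_q$-linear subspace. *)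

theory Defs
  imports "HOL-Library.FuncSet"
begin

definition OA :: "nat \<Rightarrow> nat \<Rightarrow> 'a set \<Rightarrow> 'a list list \<Rightarrow> bool" where
  "OA t k X A \<longleftrightarrow> 1 \<le> t \<and> t \<le> k \<and> finite X \<and>
     length A = card X ^ t \<and>
     (\<forall>r \<in> set A. length r = k \<and> set r \<subseteq> X) \<and>
     (\<forall>C f. C \<subseteq> {0..<k} \<longrightarrow> card C = t \<longrightarrow> f \<in> C \<rightarrow>\<^sub>E X \<longrightarrow>
        card {i. i < length A \<and> (\<forall>c\<in>C. A ! i ! c = f c)} = 1)"

text \<open>Augmented orthogonal array AOA(s,t,k,v): each row is (first k entries, last entry).\<close>
definition AOA :: "nat \<Rightarrow> nat \<Rightarrow> nat \<Rightarrow> 'a set \<Rightarrow> 'b set \<Rightarrow> ('a list \<times> 'b) list \<Rightarrow> bool" where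
  "AOA s t k X Y A \<longleftrightarrow> 1 \<le> s \<and> s \<le> t \<and> t \<le> k \<and>
     OA t k X (map fst A) \<and>
     finite Y \<and> card Y = card X ^ (t - s) \<and>
     (\<forall>r \<in> set A. snd r \<in> Y) \<and>
     (\<forall>C f y. C \<subseteq> {0..<k} \<longrightarrow> card C = s \<longrightarrow> f \<in> C \<rightarrow>\<^sub>E X \<longrightarrow> y \<in> Y \<longrightarrow>
        card {i. i < length A \<and> (\<forall>c\<in>C. fst (A ! i) ! c = f c) \<and> snd (A ! i) = y} = 1)"

definition lin_subspace :: "nat \<Rightarrow> 'a::field list set \<Rightarrow> bool" where
  "lin_subspace n S \<longleftrightarrow> (\<forall>u\<in>S. length u = n) \<and> replicate n 0 \<in> S \<and>
     (\<forall>u\<in>S. \<forall>v\<in>S. map2 (+) u v \<in> S) \<and>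
     (\<forall>c. \<forall>u\<in>S. map ((*) c) u \<in> S)"

definition linear_AOA :: "nat \<Rightarrow> nat \<Rightarrow> nat \<Rightarrow> ('a::{finite,field} list \<times> 'a list) list \<Rightarrow> bool" where
  "linear_AOA s t k A \<longleftrightarrow> AOA s t k (UNIV :: 'a set) {ys. length ys = t - s} A \<and>
     lin_subspace (k + (t - s)) ((\<lambda>r. fst r @ snd r) ` set A)"

end

theory Submission
  imports Defs
begin

lemma invol_even:
  "finite S \<Longrightarrow> (\<forall>x\<in>S. g x \<in> S \<and> g (g x) = x \<and> g x \<noteq> x) \<Longrightarrow> even (card S)"
proof (induction "card S" arbitrary: S rule: less_induct)
  case less
  show ?case
  proof (cases "S = {}")
    case True then show ?thesis by simp
  next
    case False
    then obtain x where x: "x \<in> S" by auto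
    define S' where "S' = S - {x, g x}"
    have sub: "{x, g x} \<subseteq> S" using x less.prems by auto
    have c2: "card {x, g x} = 2" using x less.prems by auto
    have cS: "card S = card S' + 2" unfolding S'_def
      using card_Diff_subset[OF _ sub] c2 less.prems(1) card_mono[OF less.prems(1) sub]
      by (simp add: finite_subset)
    have "\<forall>y\<in>S'. g y \<in> S' \<and> g (g y) = y \<and> g y \<noteq> y"
    proof
      fix y assume y: "y \<in> S'"
      then have yS: "y \<in> S" "y \<noteq> x" "y \<noteq> g x" unfolding S'_def by auto
      have p: "g y \<in> S" "g (g y) = y" "g y \<noteq> y" "g (g x) = x" using less.prems(2) yS(1) x by auto
      have "g y \<noteq> x" using p yS by metis
      moreover have "g y \<noteq> g x" using p yS by metis
      ultimately show "g y \<in> S' \<and> g (g y) = y \<and> g y \<noteq> y" using p unfolding S'_def by auto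
    qed
    then have "even (card S')" using less.hyps[of S'] cS less.prems(1) unfolding S'_def by auto
    then show ?thesis using cS by simp
  qed
qed

lemma char2:
  assumes "card (UNIV :: 'a::{finite,field} set) \<ge> 4"
    and "\<exists>m::nat. card (UNIV :: 'a set) = 2 ^ m"
  shows "(1::'a) + 1 = 0"
proof (rule ccontr)
  assume h: "(1::'a) + 1 \<noteq> 0"
  let ?S = "UNIV - {0::'a}"
  have inv: "\<forall>x\<in>?S. - x \<in> ?S \<and> - (- x) = x \<and> - x \<noteq> x"
  proof
    fix x assume "x \<in> ?S"
    then have x0: "x \<noteq> 0" by auto
    have "- x \<noteq> x"
    proof
      assume "- x = x"
      have "(1+1) * x = x + x" by (simp add: distrib_right)
      also have "\<dots> = - x + x" using \<open>- x = x\<close> by simp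
      also have "\<dots> = 0" by simp
      finally have "(1+1) * x = 0" .
      then show False using h x0 by simp
    qed
    then show "- x \<in> ?S \<and> - (- x) = x \<and> - x \<noteq> x" using x0 by auto
  qed
  have fS: "finite ?S" by simp
  have e: "even (card ?S)" by (rule invol_even[OF fS inv])
  have cS: "card ?S = card (UNIV::'a set) - 1" by (simp add: card_Diff_subset)
  obtain m where m: "card (UNIV :: 'a set) = 2 ^ m" using assms(2) by auto
  have "m \<noteq> 0" using m assms(1) by (cases m) auto
  then have "even (card (UNIV :: 'a set))" using m by simp
  moreover have "card (UNIV :: 'a set) \<ge> 1" using assms(1) by simp
  ultimately show False using e cS by presburger
qed

definition enumL :: "'b::finite list" where
  "enumL = (SOME xs. distinct xs \<and> set xs = UNIV)"

lemma enumL_props: "distinct (enumL :: 'b::finite list)" "set (enumL :: 'b list) = UNIV"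
proof -
  have "\<exists>xs::'b list. distinct xs \<and> set xs = UNIV" using finite_distinct_list[of "UNIV::'b set"] by auto
  then have "distinct (enumL :: 'b list) \<and> set (enumL :: 'b list) = UNIV"
    unfolding enumL_def by (rule someI_ex)
  then show "distinct (enumL :: 'b::finite list)" "set (enumL :: 'b list) = UNIV" by auto
qed

lemma length_enumL: "length (enumL :: 'b::finite list) = card (UNIV :: 'b set)"
  using enumL_props distinct_card by metis

lemma count_enum:
  "card {i. i < length (map r (enumL :: 'b::finite list)) \<and> P (map r enumL ! i)} = card {x. P (r x)}"
proof -
  have d: "distinct (enumL::'b list)" "set (enumL::'b list) = UNIV" using enumL_props by auto
  have eq: "{i. i < length (map r (enumL :: 'b list)) \<and> P (map r enumL ! i)}
        = {i. i < length (enumL :: 'b list) \<and> P (r (enumL ! i))}" by auto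
  have "(!) enumL ` {i. i < length (enumL :: 'b list) \<and> P (r (enumL ! i))} = {x. P (r x)}"
  proof
    show "{x. P (r x)} \<subseteq> (!) enumL ` {i. i < length (enumL :: 'b list) \<and> P (r (enumL ! i))}"
    proof
      fix x assume "x \<in> {x. P (r x)}"
      moreover have "x \<in> set enumL" using d by auto
      then obtain i where "i < length (enumL::'b list)" "enumL ! i = x" by (metis in_set_conv_nth)
      ultimately show "x \<in> (!) enumL ` {i. i < length (enumL :: 'b list) \<and> P (r (enumL ! i))}" by auto
    qed
  qed auto
  moreover have "inj_on ((!) (enumL::'b list)) {i. i < length (enumL :: 'b list) \<and> P (r (enumL ! i))}"
    using d by (auto simp: inj_on_def nth_eq_iff_index_eq)
  ultimately show ?thesis unfolding eq by (metis card_image)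
qed

definition dot :: "'a::field \<times> 'a \<times> 'a \<Rightarrow> 'a \<times> 'a \<times> 'a \<Rightarrow> 'a" where
  "dot u x = fst u * fst x + fst (snd u) * fst (snd x) + snd (snd u) * snd (snd x)"

definition det3 :: "'a::field \<times> 'a \<times> 'a \<Rightarrow> 'a \<times> 'a \<times> 'a \<Rightarrow> 'a \<times> 'a \<times> 'a \<Rightarrow> 'a" where
  "det3 u v w = fst u * (fst (snd v) * snd (snd w) - snd (snd v) * fst (snd w))
              - fst (snd u) * (fst v * snd (snd w) - snd (snd v) * fst w)
              + snd (snd u) * (fst v * fst (snd w) - fst (snd v) * fst w)"

lemma cramer:
  fixes u v w x :: "'a::field \<times> 'a \<times> 'a"
  shows "det3 u v w * fst x = (fst (snd v) * snd (snd w) - snd (snd v) * fst (snd w)) * dot u x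
     - (fst (snd u) * snd (snd w) - snd (snd u) * fst (snd w)) * dot v x
     + (fst (snd u) * snd (snd v) - snd (snd u) * fst (snd v)) * dot w x"
   and "det3 u v w * fst (snd x) = - (fst v * snd (snd w) - snd (snd v) * fst w) * dot u x
     + (fst u * snd (snd w) - snd (snd u) * fst w) * dot v x
     - (fst u * snd (snd v) - snd (snd u) * fst v) * dot w x"
   and "det3 u v w * snd (snd x) = (fst v * fst (snd w) - fst (snd v) * fst w) * dot u x
     - (fst u * fst (snd w) - fst (snd u) * fst w) * dot v x
     + (fst u * fst (snd v) - fst (snd u) * fst v) * dot w x"
  unfolding det3_def dot_def by algebra+

lemma unique_sol:
  fixes u v w :: "'a::{finite,field} \<times> 'a \<times> 'a"
  assumes "det3 u v w \<noteq> 0"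
  shows "card {x. dot u x = a \<and> dot v x = b \<and> dot w x = c} = 1"
proof -
  let ?F = "\<lambda>x. (dot u x, dot v x, dot w x)"
  have "inj ?F"
  proof (rule injI)
    fix x y assume "?F x = ?F y"
    then have e: "dot u x = dot u y" "dot v x = dot v y" "dot w x = dot w y" by auto
    have "det3 u v w * fst x = det3 u v w * fst y"
      "det3 u v w * fst (snd x) = det3 u v w * fst (snd y)"
      "det3 u v w * snd (snd x) = det3 u v w * snd (snd y)"
      by (simp_all only: cramer e)
    then show "x = y" using assms by (simp add: prod_eq_iff)
  qed
  then have "surj ?F" by (intro finite_UNIV_inj_surj) simp_all
  then obtain x where x: "?F x = (a, b, c)" using surjD[of ?F "(a,b,c)"] by auto
  have "{x. dot u x = a \<and> dot v x = b \<and> dot w x = c} = {x}"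
  proof
    show "{x. dot u x = a \<and> dot v x = b \<and> dot w x = c} \<subseteq> {x}"
      using x \<open>inj ?F\<close> by (auto dest: injD)
  qed (use x in auto)
  then show ?thesis by simp
qed

lemma dbl: "(1::'a::field) + 1 = 0 \<Longrightarrow> x + x = (0::'a)"
  by (metis distrib_right mult_1 mult_zero_left)

lemma sq_inj: "(1::'a::field) + 1 = 0 \<Longrightarrow> s * s = t * t \<Longrightarrow> s = (t::'a)"
proof -
  assume c: "(1::'a) + 1 = 0" and e: "s * s = t * t"
  have "(s - t) * (s - t) = s*s - t*t - (s*t + s*t) + (t*t + t*t)" by algebra
  also have "\<dots> = s*s - t*t" using dbl[OF c, of "s*t"] dbl[OF c, of "t*t"] by (simp only:) simp
  finally show "s = t" using e by simp
qed
lemma vand: "det3 (1,s,s*s) (1,t,t*t) (1,r,r*r) = (t-s)*(r-s)*(r-(t::'a::field))"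
  unfolding det3_def by simp algebra
lemma sq_eq_iff: "(1::'a::field) + 1 = 0 \<Longrightarrow> (s * s = t * t) = (s = (t::'a))"
  using sq_inj by metis
definition Hov :: "('a::field \<times> 'a \<times> 'a) set" where
  "Hov = range (\<lambda>t. (1, t, t*t)) \<union> {(0,1,0), (0,0,1)}"
lemma H_det:
  fixes u v w :: "'a::field \<times> 'a \<times> 'a"
  assumes c: "(1::'a) + 1 = 0" and "u \<in> Hov" "v \<in> Hov" "w \<in> Hov" "u \<noteq> v" "v \<noteq> w" "u \<noteq> w"
  shows "det3 u v w \<noteq> 0"
  using assms(2-) unfolding Hov_def
  apply (elim UnE imageE insertE emptyE)
  apply (simp_all add: vand)
  apply (simp_all add: det3_def sq_eq_iff[OF c])
  done




lemma lin_V: "lin_subspace n ((\<lambda>x. map (\<lambda>j. dot (G j) x) [0..<n]) ` (UNIV :: ('a::field \<times> 'a \<times> 'a) set))"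
  unfolding lin_subspace_def
proof (intro conjI ballI allI)
  show "replicate n 0 \<in> (\<lambda>x. map (\<lambda>j. dot (G j) x) [0..<n]) ` (UNIV :: ('a \<times> 'a \<times> 'a) set)"
  proof (rule image_eqI[where x = "(0,0,0)"])
    show "replicate n 0 = map (\<lambda>j. dot (G j) (0::'a,0::'a,0::'a)) [0..<n]"
      by (rule nth_equalityI) (simp_all add: dot_def)
  qed simp
next
  fix u v assume "u \<in> (\<lambda>x. map (\<lambda>j. dot (G j) x) [0..<n]) ` (UNIV :: ('a \<times> 'a \<times> 'a) set)"
    "v \<in> (\<lambda>x. map (\<lambda>j. dot (G j) x) [0..<n]) ` (UNIV :: ('a \<times> 'a \<times> 'a) set)"
  then obtain x y where xy: "u = map (\<lambda>j. dot (G j) x) [0..<n]" "v = map (\<lambda>j. dot (G j) y) [0..<n]" by blast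
  show "map2 (+) u v \<in> (\<lambda>x. map (\<lambda>j. dot (G j) x) [0..<n]) ` (UNIV :: ('a \<times> 'a \<times> 'a) set)"
  proof (rule image_eqI[where x = "(fst x + fst y, fst (snd x) + fst (snd y), snd (snd x) + snd (snd y))"])
    show "map2 (+) u v = map (\<lambda>j. dot (G j) (fst x + fst y, fst (snd x) + fst (snd y), snd (snd x) + snd (snd y))) [0..<n]"
      unfolding xy by (rule nth_equalityI) (simp_all add: dot_def algebra_simps)
  qed simp
next
  fix c u assume "u \<in> (\<lambda>x. map (\<lambda>j. dot (G j) x) [0..<n]) ` (UNIV :: ('a \<times> 'a \<times> 'a) set)"
  then obtain x where xy: "u = map (\<lambda>j. dot (G j) x) [0..<n]" by blast
  show "map ((*) c) u \<in> (\<lambda>x. map (\<lambda>j. dot (G j) x) [0..<n]) ` (UNIV :: ('a \<times> 'a \<times> 'a) set)"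
  proof (rule image_eqI[where x = "(c * fst x, c * fst (snd x), c * snd (snd x))"])
    show "map ((*) c) u = map (\<lambda>j. dot (G j) (c * fst x, c * fst (snd x), c * snd (snd x))) [0..<n]"
      unfolding xy by (rule nth_equalityI) (simp_all add: dot_def algebra_simps)
  qed simp
qed (auto)

definition gv :: "nat \<Rightarrow> 'a::{finite,field} \<times> 'a \<times> 'a" where
  "gv j = (if j < card (UNIV::'a set) then (1, enumL ! j, enumL ! j * enumL ! j)
           else if j = card (UNIV::'a set) then (0,1,0) else (0,0,1))"

lemma gv_H: "gv j \<in> Hov"
  unfolding gv_def Hov_def by auto

lemma gv_inj:
  assumes "j < card (UNIV::'a set) + 2" "l < card (UNIV::'a set) + 2" "(gv j :: 'a::{finite,field} \<times> 'a \<times> 'a) = gv l"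
  shows "j = l"
proof -
  have d: "distinct (enumL :: 'a list)" using enumL_props by auto
  show ?thesis using assms d unfolding gv_def
    by (auto split: if_splits simp: nth_eq_iff_index_eq length_enumL)
qed

lemma ext_det: "det3 u (0,1,-1) (1,-a,0) = -(a * fst u + fst (snd u) + snd (snd u))"
  unfolding det3_def by (simp add: algebra_simps)

lemma ext_nz:
  assumes "\<forall>t::'a. t*t + t + a \<noteq> 0"
  shows "det3 (gv j :: 'a::{finite,field} \<times> 'a \<times> 'a) (0,1,-1) (1,-a,0) \<noteq> 0"
proof -
  have H: "a + t + t*t \<noteq> 0" for t using assms by (metis add.commute add.left_commute)
  have "a * fst (gv j) + fst (snd (gv j)) + snd (snd (gv j)) \<noteq> 0" unfolding gv_def using H by auto
  then show ?thesis by (subst ext_det) (simp only: neg_equal_0_iff_equal not_False_eq_True)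
qed

definition row :: "'a \<Rightarrow> 'a \<times> 'a \<times> 'a \<Rightarrow> 'a::{finite,field} list \<times> 'a list" where
  "row a x = (map (\<lambda>j. dot (gv j) x) [0..<card (UNIV::'a set) + 2], [dot (0,1,-1) x, dot (1,-a,0) x])"

definition Arr :: "'a \<Rightarrow> ('a::{finite,field} list \<times> 'a list) list" where
  "Arr a = map (row a) enumL"

lemma fst_row: "j < card (UNIV::'a set) + 2 \<Longrightarrow> fst (row a x) ! j = dot (gv j) (x :: 'a::{finite,field} \<times> 'a \<times> 'a)"
  unfolding row_def by (simp del: upt_Suc)

lemma card_triples: "card (UNIV :: ('a::finite \<times> 'a \<times> 'a) set) = card (UNIV::'a set) ^ 3"
proof -
  have "card (UNIV :: ('a \<times> 'a \<times> 'a) set) = card (UNIV::'a set) * (card (UNIV::'a set) * card (UNIV::'a set))"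
    by (metis UNIV_Times_UNIV card_cartesian_product)
  then show ?thesis by (simp add: power3_eq_cube)
qed

theorem theorem3p9:
  assumes "card (UNIV :: 'a::{finite,field} set) \<ge> 4"
    and "\<exists>m::nat. card (UNIV :: 'a set) = 2 ^ m"
  shows "\<exists>A :: ('a list \<times> 'a list) list. linear_AOA 1 3 (card (UNIV :: 'a set) + 2) A"
proof -
  have c: "(1::'a) + 1 = 0" using char2[OF assms] .
  obtain a :: 'a where a: "\<forall>t. t*t + t + a \<noteq> 0"
  proof -
    let ?f = "\<lambda>t::'a. t*t + t"
    have "?f 0 = ?f 1" using c by simp
    then have "\<not> inj ?f" unfolding inj_def by (metis zero_neq_one)
    then have "\<not> surj ?f" using finite_UNIV_surj_inj[of ?f] by auto
    then obtain b where b: "\<forall>t. b \<noteq> ?f t" unfolding surj_def by blast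
    have "\<forall>t. t*t + t + (-b) \<noteq> 0"
    proof
      fix t show "t*t + t + (-b) \<noteq> 0" using b[rule_format, of t] by (simp add: algebra_simps)
    qed
    then show ?thesis using that by blast
  qed
  define q where "q = card (UNIV :: 'a set)"
  have q4: "q \<ge> 4" using assms(1) q_def by simp
  have lenA: "length (Arr a) = q ^ 3"
    unfolding Arr_def q_def by (simp add: length_enumL card_triples)
  have OAc: "card {i. i < length (map fst (Arr a)) \<and> (\<forall>c\<in>C. map fst (Arr a) ! i ! c = f c)} = 1"
    if C: "C \<subseteq> {0..<q+2}" "card C = 3" for C f
  proof -
    obtain j1 j2 j3 where J: "C = {j1, j2, j3}" "j1 \<noteq> j2" "j2 \<noteq> j3" "j1 \<noteq> j3"
      using C(2) card_3_iff by metis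
    have jl: "j1 < q+2" "j2 < q+2" "j3 < q+2" using C(1) J(1) by auto
    have "map fst (Arr a) = map (\<lambda>x. fst (row a x)) enumL" unfolding Arr_def by simp
    then have "card {i. i < length (map fst (Arr a)) \<and> (\<forall>c\<in>C. map fst (Arr a) ! i ! c = f c)}
       = card {x. \<forall>c\<in>C. fst (row a x) ! c = f c}"
      using count_enum[of "\<lambda>x. fst (row a x)" "\<lambda>r. \<forall>c\<in>C. r ! c = f c"] by simp
    also have "{x. \<forall>c\<in>C. fst (row a x) ! c = f c}
        = {x. dot (gv j1) x = f j1 \<and> dot (gv j2) x = f j2 \<and> dot (gv j3) x = f j3}"
      using jl unfolding J(1) q_def by (auto simp: fst_row)
    also have "card \<dots> = 1"
    proof (rule unique_sol, rule H_det[OF c gv_H gv_H gv_H])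
      show "gv j1 \<noteq> (gv j2 :: 'a \<times> 'a \<times> 'a)" using gv_inj jl J unfolding q_def by metis
      show "gv j2 \<noteq> (gv j3 :: 'a \<times> 'a \<times> 'a)" using gv_inj jl J unfolding q_def by metis
      show "gv j1 \<noteq> (gv j3 :: 'a \<times> 'a \<times> 'a)" using gv_inj jl J unfolding q_def by metis
    qed
    finally show ?thesis .
  qed
  have AOAc: "card {i. i < length (Arr a) \<and> (\<forall>c\<in>C. fst (Arr a ! i) ! c = f c) \<and> snd (Arr a ! i) = y} = 1"
    if C: "C \<subseteq> {0..<q+2}" "card C = 1" and y0: "y \<in> {ys. length ys = 3 - 1}" for C f y
  proof -
    obtain j where J: "C = {j}" using C(2) card_1_singleton_iff by (metis One_nat_def)
    have jl: "j < q+2" using C(1) J by auto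
    have y: "length y = 2" using y0 by simp
    obtain y0 y1 where Y: "y = [y0, y1]" using y
      by (metis (no_types, opaque_lifting) One_nat_def Suc_length_conv length_0_conv numeral_2_eq_2)
    have "card {i. i < length (Arr a) \<and> (\<forall>c\<in>C. fst (Arr a ! i) ! c = f c) \<and> snd (Arr a ! i) = y}
       = card {x. (\<forall>c\<in>C. fst (row a x) ! c = f c) \<and> snd (row a x) = y}"
      using count_enum[of "row a" "\<lambda>r. (\<forall>c\<in>C. fst r ! c = f c) \<and> snd r = y"] unfolding Arr_def by simp
    also have "{x. (\<forall>c\<in>C. fst (row a x) ! c = f c) \<and> snd (row a x) = y}
        = {x. dot (gv j) x = f j \<and> dot (0,1,-1) x = y0 \<and> dot (1,-a,0) x = y1}"
      using jl unfolding J Y q_def by (auto simp: fst_row) (auto simp: row_def)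
    also have "card \<dots> = 1"
      by (rule unique_sol, rule ext_nz[OF a])
    finally show ?thesis .
  qed
  define G where "G j = (if j < q+2 then gv j else if j = q+2 then (0,1,-1) else (1,-a,0::'a))" for j
  have V: "fst (row a x) @ snd (row a x) = map (\<lambda>j. dot (G j) x) [0..<q+4]" for x
  proof (rule nth_equalityI)
    show "length (fst (row a x) @ snd (row a x)) = length (map (\<lambda>j. dot (G j) x) [0..<q+4])"
      unfolding row_def q_def by simp
  next
    fix i assume "i < length (fst (row a x) @ snd (row a x))"
    then have i: "i < q + 4" unfolding row_def q_def by simp
    have L: "length (fst (row a x)) = q + 2" unfolding row_def q_def by (simp del: upt_Suc)
    have S: "snd (row a x) = [dot (0,1,-1) x, dot (1,-a,0) x]" unfolding row_def by simp
    have R: "map (\<lambda>j. dot (G j) x) [0..<q+4] ! i = dot (G i) x" using i by (simp del: upt_Suc)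
    consider "i < q+2" | "i = q+2" | "i = q+3" using i by linarith
    then show "(fst (row a x) @ snd (row a x)) ! i = map (\<lambda>j. dot (G j) x) [0..<q+4] ! i"
    proof cases
      case 1
      then show ?thesis unfolding R using L fst_row[of i a x] by (simp add: nth_append G_def q_def)
    next
      case 2
      then show ?thesis unfolding R using L S by (simp add: nth_append G_def)
    next
      case 3
      then show ?thesis unfolding R using L S by (simp add: nth_append G_def)
    qed
  qed
  have rows: "(\<lambda>r. fst r @ snd r) ` set (Arr a) = (\<lambda>x. map (\<lambda>j. dot (G j) x) [0..<q+4]) ` UNIV"
  proof -
    have "(\<lambda>r. fst r @ snd r) ` set (Arr a) = (\<lambda>x. fst (row a x) @ snd (row a x)) ` set enumL"
      unfolding Arr_def by auto
    then show ?thesis using V by (simp add: enumL_props)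
  qed
  have finY: "finite {ys::'a list. length ys = 2}"
    using finite_lists_length_eq[of "UNIV::'a set" 2] by simp
  have cardY: "card {ys::'a list. length ys = 2} = q ^ 2"
    using card_lists_length_eq[of "UNIV::'a set" 2] unfolding q_def by simp
  have "linear_AOA 1 3 (q + 2) (Arr a)"
  proof -
    have f1: "3 \<le> q + 2" using q4 by simp
    have f2: "length (map fst (Arr a)) = card (UNIV::'a set) ^ 3" using lenA q_def by simp
    have f3: "\<forall>r\<in>set (map fst (Arr a)). length r = q + 2 \<and> set r \<subseteq> UNIV"
      unfolding Arr_def row_def q_def by auto
    have f4: "card {ys::'a list. length ys = 3 - 1} = card (UNIV::'a set) ^ (3 - 1)" using cardY q_def by simp
    have f5: "\<forall>r\<in>set (Arr a). snd r \<in> {ys. length ys = 3 - 1}" unfolding Arr_def row_def by auto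
    have f6: "lin_subspace (q + 2 + (3 - 1)) ((\<lambda>r. fst r @ snd r) ` set (Arr a))"
    proof -
      have e: "q + 2 + (3 - 1) = q + 4" by simp
      show ?thesis unfolding rows e by (rule lin_V)
    qed
    have finY': "finite {ys::'a list. length ys = 3 - 1}" using finY by simp
    have fU: "finite (UNIV :: 'a set)" by simp
    show ?thesis unfolding linear_AOA_def AOA_def OA_def
      apply (intro conjI allI impI)
      apply (simp_all only: f1[THEN eqTrueI] f2[THEN eqTrueI] f3[THEN eqTrueI] f4[THEN eqTrueI]
         f5[THEN eqTrueI] f6[THEN eqTrueI] finY'[THEN eqTrueI] fU[THEN eqTrueI] OAc AOAc)
      done
  qed
  then show ?thesis unfolding q_def by blast
qed

end
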